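(* Let $E$ be a Banach sequence lattice on which all shifts $\tau_n$, $n\in\mathbb Z$, are bounded and such that $k_-(E)<1$, and let $X$ be a symmetric sequence space such that, for real sequences $a$, $a\in X$ if and only if $\sum_{k=0}^\infty a^*_{2^k}e_{k+1}\in E$, and $\|a\|_X\asymp\|\sum_{k=0}^\infty a^*_{2^k}e_{k+1}\|_E$ with constants independent of $a$. Then $E_X=E$ as sets, with equivalent norms.
   Context: A Banach sequence lattice is a Banach space $E$ of real sequences such that $x\in E$, $|y_k|\le|x_k|$ imply $y\in E$, $\|y\|_E\le\|x\|_E$. $u^*$ is the nonincreasing rearrangement of $(|u_k|)$. A symmetric sequence space is a Banach sequence lattice $X\subset\ell^\infty$ such that $x\in X$, $y^*=x^*$ imply $y\in X$, $\|y\|_X=\|x\|_X$; standing assumption: $X$ is separable or has the Fatou property. $\tau_nx=(x_{k-n})_{k\ge1}$ with $x_j:=0$ for $j\notin\mathbb N$; $k_-(E)=\lim_{n\to\infty}\|\tau_{-n}\|_E^{1/n}$. $f\asymp g$ means $cf\le g\le Cf$ for constants $c,C>0$. $E_X$ is the Banach sequence lattice of real sequences $a$ with $\|a\|_{E_X}:=\|\sum_{k=1}^\infty a_k\sum_{i=2^{k-1}}^{2^k-1}e_i\|_X<\infty$. *)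

theory Defs
  imports Complex_Main "HOL-Library.Countable_Set"
begin

text \<open>Real sequences (x_k)_{k>=1} are represented as functions nat => real,
  with the convention that the (meaningless) coordinate 0 is 0.\<close>

definition seqs :: "(nat \<Rightarrow> real) set" where
  "seqs = {x. x 0 = 0}"

definition is_banach_seq_lattice :: "(nat \<Rightarrow> real) set \<Rightarrow> ((nat \<Rightarrow> real) \<Rightarrow> real) \<Rightarrow> bool" where
  "is_banach_seq_lattice E N \<longleftrightarrow>
     E \<subseteq> seqs \<and>
     (\<lambda>k. 0) \<in> E \<and>
     (\<forall>x\<in>E. \<forall>y\<in>E. (\<lambda>k. x k + y k) \<in> E) \<and>
     (\<forall>x\<in>E. \<forall>c::real. (\<lambda>k. c * x k) \<in> E) \<and>
     (\<forall>x\<in>E. N x \<ge> 0 \<and> (N x = 0 \<longleftrightarrow> x = (\<lambda>k. 0))) \<and>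
     (\<forall>x\<in>E. \<forall>c::real. N (\<lambda>k. c * x k) = \<bar>c\<bar> * N x) \<and>
     (\<forall>x\<in>E. \<forall>y\<in>E. N (\<lambda>k. x k + y k) \<le> N x + N y) \<and>
     (\<forall>x\<in>E. \<forall>y\<in>seqs. (\<forall>k. \<bar>y k\<bar> \<le> \<bar>x k\<bar>) \<longrightarrow> y \<in> E \<and> N y \<le> N x) \<and>
     (\<forall>u::nat \<Rightarrow> nat \<Rightarrow> real. (\<forall>m. u m \<in> E) \<and>
        (\<forall>\<epsilon>>0. \<exists>M. \<forall>m\<ge>M. \<forall>n\<ge>M. N (\<lambda>k. u m k - u n k) < \<epsilon>) \<longrightarrow>
        (\<exists>x\<in>E. (\<lambda>m. N (\<lambda>k. u m k - x k)) \<longlonglongrightarrow> 0))"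

definition decr_rearr :: "(nat \<Rightarrow> real) \<Rightarrow> nat \<Rightarrow> real" where
  "decr_rearr u n = Inf {s. s \<ge> 0 \<and> finite {k. k \<ge> 1 \<and> \<bar>u k\<bar> > s}
                              \<and> card {k. k \<ge> 1 \<and> \<bar>u k\<bar> > s} < n}"

definition bounded_seq :: "(nat \<Rightarrow> real) \<Rightarrow> bool" where
  "bounded_seq x \<longleftrightarrow> (\<exists>B. \<forall>k. \<bar>x k\<bar> \<le> B)"

definition has_fatou :: "(nat \<Rightarrow> real) set \<Rightarrow> ((nat \<Rightarrow> real) \<Rightarrow> real) \<Rightarrow> bool" where
  "has_fatou X N \<longleftrightarrow>
     (\<forall>u::nat \<Rightarrow> nat \<Rightarrow> real. \<forall>x\<in>seqs.
        (\<forall>m. u m \<in> X) \<and> (\<forall>m k. 0 \<le> u m k \<and> u m k \<le> u (Suc m) k) \<and>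
        (\<forall>k. (\<lambda>m. u m k) \<longlonglongrightarrow> x k) \<and> (\<exists>B. \<forall>m. N (u m) \<le> B) \<longrightarrow>
        x \<in> X \<and> N x = (SUP m. N (u m)))"

definition separable_sp :: "(nat \<Rightarrow> real) set \<Rightarrow> ((nat \<Rightarrow> real) \<Rightarrow> real) \<Rightarrow> bool" where
  "separable_sp X N \<longleftrightarrow>
     (\<exists>D. countable D \<and> D \<subseteq> X \<and>
        (\<forall>x\<in>X. \<forall>\<epsilon>>0. \<exists>d\<in>D. N (\<lambda>k. x k - d k) < \<epsilon>))"

definition is_symmetric_seq_space :: "(nat \<Rightarrow> real) set \<Rightarrow> ((nat \<Rightarrow> real) \<Rightarrow> real) \<Rightarrow> bool" where
  "is_symmetric_seq_space X N \<longleftrightarrow>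
     is_banach_seq_lattice X N \<and>
     (\<forall>x\<in>X. bounded_seq x) \<and>
     (\<forall>x\<in>X. \<forall>y\<in>seqs. bounded_seq y \<and> (\<forall>n\<ge>1. decr_rearr y n = decr_rearr x n)
          \<longrightarrow> y \<in> X \<and> N y = N x) \<and>
     (separable_sp X N \<or> has_fatou X N)"

definition shift :: "int \<Rightarrow> (nat \<Rightarrow> real) \<Rightarrow> nat \<Rightarrow> real" where
  "shift n x k = (if k \<ge> 1 \<and> int k - n \<ge> 1 then x (nat (int k - n)) else 0)"

definition op_bounded_on :: "(nat \<Rightarrow> real) set \<Rightarrow> ((nat \<Rightarrow> real) \<Rightarrow> real)
     \<Rightarrow> ((nat \<Rightarrow> real) \<Rightarrow> nat \<Rightarrow> real) \<Rightarrow> bool" where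
  "op_bounded_on E N T \<longleftrightarrow> (\<forall>x\<in>E. T x \<in> E) \<and> (\<exists>C. \<forall>x\<in>E. N (T x) \<le> C * N x)"

definition op_norm :: "(nat \<Rightarrow> real) set \<Rightarrow> ((nat \<Rightarrow> real) \<Rightarrow> real)
     \<Rightarrow> ((nat \<Rightarrow> real) \<Rightarrow> nat \<Rightarrow> real) \<Rightarrow> real" where
  "op_norm E N T = Sup {N (T x) | x. x \<in> E \<and> N x \<le> 1}"

definition k_minus :: "(nat \<Rightarrow> real) set \<Rightarrow> ((nat \<Rightarrow> real) \<Rightarrow> real) \<Rightarrow> real" where
  "k_minus E N = lim (\<lambda>n. root n (op_norm E N (shift (- int n))))"

definition dyadic_rearr :: "(nat \<Rightarrow> real) \<Rightarrow> nat \<Rightarrow> real" where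
  "dyadic_rearr a j = (if j \<ge> 1 then decr_rearr a (2 ^ (j - 1)) else 0)"

definition block_seq :: "(nat \<Rightarrow> real) \<Rightarrow> nat \<Rightarrow> real" where
  "block_seq a i = (\<Sum>k. a k * (if k \<ge> 1 \<and> 2 ^ (k - 1) \<le> i \<and> i \<le> 2 ^ k - 1 then 1 else 0))"

definition EX_set :: "(nat \<Rightarrow> real) set \<Rightarrow> (nat \<Rightarrow> real) set" where
  "EX_set X = {a \<in> seqs. block_seq a \<in> X}"

definition EX_norm :: "((nat \<Rightarrow> real) \<Rightarrow> real) \<Rightarrow> (nat \<Rightarrow> real) \<Rightarrow> real" where
  "EX_norm NX a = NX (block_seq a)"

end

theory Submission
  imports Defs
begin



lemma block_at:
  assumes "k \<ge> 1" "2^(k-1) \<le> i" "i < (2::nat)^k"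
  shows "block_seq a i = a k"
proof -
  have eq: "(\<lambda>n. a n * (if n \<ge> 1 \<and> 2 ^ (n - 1) \<le> i \<and> i \<le> 2 ^ n - 1 then 1 else 0))
      = (\<lambda>n. if n = k then a n else 0)"
  proof
    fix n
    show "a n * (if n \<ge> 1 \<and> 2 ^ (n - 1) \<le> i \<and> i \<le> 2 ^ n - 1 then 1 else 0)
      = (if n = k then a n else 0)"
    proof (cases "n \<ge> 1 \<and> 2 ^ (n - 1) \<le> i \<and> i \<le> 2 ^ n - 1")
      case True
      have p: "(2::nat)^n \<ge> 1" by simp
      have n1: "n \<ge> 1" and l: "2^(n-1) \<le> i" using True by auto
      have u: "i < (2::nat)^n" using True p by linarith
      have "n = k"
      proof (rule ccontr)
        assume "n \<noteq> k"
        then consider "n < k" | "k < n" by linarith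
        then show False
        proof cases
          case 1
          then have "(2::nat)^n \<le> 2^(k-1)" by (intro power_increasing) auto
          then show False using u assms by linarith
        next
          case 2
          then have "(2::nat)^k \<le> 2^(n-1)" by (intro power_increasing) auto
          then show False using l assms by linarith
        qed
      qed
      then show ?thesis using True by simp
    next
      case False
      have "n \<noteq> k" using False assms one_le_power[of "2::nat" k] by auto
      then show ?thesis by (subst if_not_P[OF False]) simp
    qed
  qed
  show ?thesis unfolding block_seq_def eq using sums_single[of k a] sums_unique by metis
qed

lemma block0: "block_seq a 0 = 0"
  unfolding block_seq_def by simp

lemma block_exists:
  assumes "i \<ge> 1" shows "\<exists>k\<ge>1. 2^(k-1) \<le> i \<and> i < (2::nat)^k"
proof -
  have ex: "\<exists>k. i < (2::nat)^k" by (intro exI[of _ i]) (simp add: less_exp)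
  define k where "k = (LEAST k. i < (2::nat)^k)"
  have k1: "i < 2^k" unfolding k_def by (rule LeastI_ex[OF ex])
  have "k \<noteq> 0"
  proof
    assume "k = 0" then show False using k1 assms by simp
  qed
  moreover have "\<not> i < 2^(k-1)"
    using not_less_Least[of "k-1" "\<lambda>k. i < (2::nat)^k"] \<open>k \<noteq> 0\<close> unfolding k_def by auto
  ultimately show ?thesis using k1 by (intro exI[of _ k]) auto
qed

lemma block_ge:
  assumes "j \<ge> 1" "2^(j-1) \<le> i"
  shows "\<exists>k\<ge>j. block_seq a i = a k"
proof -
  have "i \<ge> 1" using assms(2) one_le_power[of "2::nat" "j-1"] by linarith
  then obtain k where k: "k \<ge> 1" "2^(k-1) \<le> i" "i < (2::nat)^k" using block_exists by blast
  have "k \<ge> j"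
  proof (rule ccontr)
    assume "\<not> k \<ge> j"
    then have "(2::nat)^k \<le> 2^(j-1)" by (intro power_increasing) auto
    then show False using k assms by linarith
  qed
  then show ?thesis using block_at[OF k] by blast
qed

lemma dr_upper:
  assumes "s \<ge> 0" "j \<ge> 1" "\<forall>i. 2^(j-1) \<le> i \<longrightarrow> \<bar>b i\<bar> \<le> s"
  shows "decr_rearr b (2^(j-1)) \<le> s \<and> 0 \<le> decr_rearr b (2^(j-1))"
proof -
  let ?S = "{s. s \<ge> 0 \<and> finite {k. k \<ge> 1 \<and> \<bar>b k\<bar> > s}
                              \<and> card {k. k \<ge> 1 \<and> \<bar>b k\<bar> > s} < (2::nat)^(j-1)}"
  have sub: "{k. k \<ge> 1 \<and> \<bar>b k\<bar> > s} \<subseteq> {1..<2^(j-1)}"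
    using assms(3) by (auto simp: not_le[symmetric])
  have "card {k. k \<ge> 1 \<and> \<bar>b k\<bar> > s} \<le> card {1..<(2::nat)^(j-1)}"
    by (rule card_mono[OF _ sub]) simp
  also have "\<dots> < 2^(j-1)" by simp
  finally have "s \<in> ?S" using assms(1) finite_subset[OF sub] by auto
  moreover have "bdd_below ?S" by (intro bdd_belowI[of _ 0]) auto
  ultimately have "Inf ?S \<le> s" "0 \<le> Inf ?S"
    by (auto intro!: cInf_lower cInf_greatest)
  then show ?thesis unfolding decr_rearr_def by simp
qed

lemma dr_lower:
  assumes "bounded_seq b" "j \<ge> 1" "\<forall>i. 2^(j-1) \<le> i \<and> i < (2::nat)^j \<longrightarrow> v \<le> \<bar>b i\<bar>"
  shows "v \<le> decr_rearr b (2^(j-1))"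
proof -
  let ?S = "{s. s \<ge> 0 \<and> finite {k. k \<ge> 1 \<and> \<bar>b k\<bar> > s}
                              \<and> card {k. k \<ge> 1 \<and> \<bar>b k\<bar> > s} < (2::nat)^(j-1)}"
  obtain B where B: "\<forall>k. \<bar>b k\<bar> \<le> B" using assms(1) unfolding bounded_seq_def by blast
  have nb: "\<not> (\<bar>b k\<bar> > max B 0)" for k using B[rule_format, of k] by simp
  have e: "{k. k \<ge> 1 \<and> \<bar>b k\<bar> > max B 0} = {}" using nb by blast
  have "max B 0 \<in> ?S" unfolding mem_Collect_eq e by simp
  then have ne: "?S \<noteq> {}" by blast
  have "v \<le> s" if "s \<in> ?S" for s
  proof (rule ccontr)
    assume "\<not> v \<le> s"
    have sub: "{2^(j-1)..<2^j} \<subseteq> {k. k \<ge> 1 \<and> \<bar>b k\<bar> > s}"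
    proof
      fix x assume x: "x \<in> {(2::nat)^(j-1)..<2^j}"
      have o: "(1::nat) \<le> 2^(j-1)" by simp
      have "2^(j-1) \<le> x" using x by simp
      then have "1 \<le> x" using o by linarith
      then show "x \<in> {k. k \<ge> 1 \<and> \<bar>b k\<bar> > s}"
        using x assms(3) \<open>\<not> v \<le> s\<close> by auto
    qed
    have "card {(2::nat)^(j-1)..<2^j} \<le> card {k. k \<ge> 1 \<and> \<bar>b k\<bar> > s}"
      using that by (intro card_mono[OF _ sub]) auto
    moreover have "card {(2::nat)^(j-1)..<2^j} = 2^(j-1)"
    proof -
      have "(2::nat)^j = 2 * 2^(j-1)" using assms(2) by (metis Suc_diff_1 less_le_trans zero_less_one power_Suc)
      then show ?thesis by simp
    qed
    ultimately show False using that by auto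
  qed
  then have "v \<le> Inf ?S" using ne by (intro cInf_greatest) auto
  then show ?thesis unfolding decr_rearr_def by simp
qed




lemma latO:
  assumes "is_banach_seq_lattice E N"
  shows "E \<subseteq> seqs"
    and "(\<lambda>k. 0) \<in> E"
    and "\<forall>x\<in>E. \<forall>y\<in>E. (\<lambda>k. x k + y k) \<in> E"
    and "\<forall>x\<in>E. \<forall>c::real. (\<lambda>k. c * x k) \<in> E"
    and "\<forall>x\<in>E. N x \<ge> 0 \<and> (N x = 0 \<longleftrightarrow> x = (\<lambda>k. 0))"
    and "\<forall>x\<in>E. \<forall>c::real. N (\<lambda>k. c * x k) = \<bar>c\<bar> * N x"
    and "\<forall>x\<in>E. \<forall>y\<in>E. N (\<lambda>k. x k + y k) \<le> N x + N y"
    and "\<forall>x\<in>E. \<forall>y\<in>seqs. (\<forall>k. \<bar>y k\<bar> \<le> \<bar>x k\<bar>) \<longrightarrow> y \<in> E \<and> N y \<le> N x"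
    and "\<forall>u::nat \<Rightarrow> nat \<Rightarrow> real. (\<forall>m. u m \<in> E) \<and> (\<forall>\<epsilon>>0. \<exists>M. \<forall>m\<ge>M. \<forall>n\<ge>M. N (\<lambda>k. u m k - u n k) < \<epsilon>) \<longrightarrow> (\<exists>x\<in>E. (\<lambda>m. N (\<lambda>k. u m k - x k)) \<longlonglongrightarrow> 0)"
proof -
  have H: "(E \<subseteq> seqs) \<and> ((\<lambda>k. 0) \<in> E) \<and> (\<forall>x\<in>E. \<forall>y\<in>E. (\<lambda>k. x k + y k) \<in> E) \<and> (\<forall>x\<in>E. \<forall>c::real. (\<lambda>k. c * x k) \<in> E) \<and> (\<forall>x\<in>E. N x \<ge> 0 \<and> (N x = 0 \<longleftrightarrow> x = (\<lambda>k. 0))) \<and> (\<forall>x\<in>E. \<forall>c::real. N (\<lambda>k. c * x k) = \<bar>c\<bar> * N x) \<and> (\<forall>x\<in>E. \<forall>y\<in>E. N (\<lambda>k. x k + y k) \<le> N x + N y) \<and> (\<forall>x\<in>E. \<forall>y\<in>seqs. (\<forall>k. \<bar>y k\<bar> \<le> \<bar>x k\<bar>) \<longrightarrow> y \<in> E \<and> N y \<le> N x) \<and> (\<forall>u::nat \<Rightarrow> nat \<Rightarrow> real. (\<forall>m. u m \<in> E) \<and> (\<forall>\<epsilon>>0. \<exists>M. \<forall>m\<ge>M. \<forall>n\<ge>M. N (\<lambda>k. u m k - u n k) < \<epsilon>) \<longrightarrow> (\<exists>x\<in>E. (\<lambda>m. N (\<lambda>k. u m k - x k)) \<longlonglongrightarrow>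 0))" using assms unfolding is_banach_seq_lattice_def .
  show "E \<subseteq> seqs" by (rule H[THEN conjunct1])
  show "(\<lambda>k. 0) \<in> E" by (rule H[THEN conjunct2, THEN conjunct1])
  show "\<forall>x\<in>E. \<forall>y\<in>E. (\<lambda>k. x k + y k) \<in> E" by (rule H[THEN conjunct2, THEN conjunct2, THEN conjunct1])
  show "\<forall>x\<in>E. \<forall>c::real. (\<lambda>k. c * x k) \<in> E" by (rule H[THEN conjunct2, THEN conjunct2, THEN conjunct2, THEN conjunct1])
  show "\<forall>x\<in>E. N x \<ge> 0 \<and> (N x = 0 \<longleftrightarrow> x = (\<lambda>k. 0))" by (rule H[THEN conjunct2, THEN conjunct2, THEN conjunct2, THEN conjunct2, THEN conjunct1])
  show "\<forall>x\<in>E. \<forall>c::real. N (\<lambda>k. c * x k) = \<bar>c\<bar> * N x" by (rule H[THEN conjunct2, THEN conjunct2, THEN conjunct2, THEN conjunct2, THEN conjunct2, THEN conjunct1])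
  show "\<forall>x\<in>E. \<forall>y\<in>E. N (\<lambda>k. x k + y k) \<le> N x + N y" by (rule H[THEN conjunct2, THEN conjunct2, THEN conjunct2, THEN conjunct2, THEN conjunct2, THEN conjunct2, THEN conjunct1])
  show "\<forall>x\<in>E. \<forall>y\<in>seqs. (\<forall>k. \<bar>y k\<bar> \<le> \<bar>x k\<bar>) \<longrightarrow> y \<in> E \<and> N y \<le> N x" by (rule H[THEN conjunct2, THEN conjunct2, THEN conjunct2, THEN conjunct2, THEN conjunct2, THEN conjunct2, THEN conjunct2, THEN conjunct1])
  show "\<forall>u::nat \<Rightarrow> nat \<Rightarrow> real. (\<forall>m. u m \<in> E) \<and> (\<forall>\<epsilon>>0. \<exists>M. \<forall>m\<ge>M. \<forall>n\<ge>M. N (\<lambda>k. u m k - u n k) < \<epsilon>) \<longrightarrow> (\<exists>x\<in>E. (\<lambda>m. N (\<lambda>k. u m k - x k)) \<longlonglongrightarrow> 0)" by (rule H[THEN conjunct2, THEN conjunct2, THEN conjunct2, THEN conjunct2, THEN conjunct2, THEN conjunct2, THEN conjunct2, THEN conjunct2])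
qed

lemma latD:
  assumes L: "is_banach_seq_lattice E N"
  shows "E \<subseteq> seqs" "(\<lambda>k. 0) \<in> E"
    "\<And>x y. x\<in>E \<Longrightarrow> y\<in>E \<Longrightarrow> (\<lambda>k. x k + y k) \<in> E"
    "\<And>x c. x\<in>E \<Longrightarrow> (\<lambda>k. c * x k) \<in> E"
    "\<And>x. x\<in>E \<Longrightarrow> N x \<ge> 0"
    "\<And>x. x\<in>E \<Longrightarrow> N x = 0 \<longleftrightarrow> x = (\<lambda>k. 0)"
    "\<And>x c. x\<in>E \<Longrightarrow> N (\<lambda>k. c * x k) = \<bar>c\<bar> * N x"
    "\<And>x y. x\<in>E \<Longrightarrow> y\<in>E \<Longrightarrow> N (\<lambda>k. x k + y k) \<le> N x + N y"
    "\<And>x y. x\<in>E \<Longrightarrow> y\<in>seqs \<Longrightarrow> (\<forall>k. \<bar>y k\<bar> \<le> \<bar>x k\<bar>) \<Longrightarrow> y \<in> E \<and> N y \<le> N x"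
    "\<And>u. (\<forall>m. u m \<in> E) \<Longrightarrow>
        (\<forall>\<epsilon>>0. \<exists>M. \<forall>m\<ge>M. \<forall>n\<ge>M. N (\<lambda>k. u m k - u n k) < \<epsilon>) \<Longrightarrow>
        (\<exists>x\<in>E. (\<lambda>m. N (\<lambda>k. u m k - x k)) \<longlonglongrightarrow> 0)"
proof -
  show "E \<subseteq> seqs" by (rule latO(1)[OF L])
  show "(\<lambda>k. 0) \<in> E" by (rule latO(2)[OF L])
  show "\<And>x y. x\<in>E \<Longrightarrow> y\<in>E \<Longrightarrow> (\<lambda>k. x k + y k) \<in> E" using latO(3)[OF L] by blast
  show "\<And>x c. x\<in>E \<Longrightarrow> (\<lambda>k. c * x k) \<in> E" using latO(4)[OF L] by blast
  show "\<And>x. x\<in>E \<Longrightarrow> N x \<ge> 0" using latO(5)[OF L] by blast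
  show "\<And>x. x\<in>E \<Longrightarrow> N x = 0 \<longleftrightarrow> x = (\<lambda>k. 0)" using latO(5)[OF L] by blast
  show "\<And>x c. x\<in>E \<Longrightarrow> N (\<lambda>k. c * x k) = \<bar>c\<bar> * N x" using latO(6)[OF L] by blast
  show "\<And>x y. x\<in>E \<Longrightarrow> y\<in>E \<Longrightarrow> N (\<lambda>k. x k + y k) \<le> N x + N y" using latO(7)[OF L] by blast
  show "\<And>x y. x\<in>E \<Longrightarrow> y\<in>seqs \<Longrightarrow> (\<forall>k. \<bar>y k\<bar> \<le> \<bar>x k\<bar>) \<Longrightarrow> y \<in> E \<and> N y \<le> N x"
    using latO(8)[OF L] by blast
  show "\<And>u. (\<forall>m. u m \<in> E) \<Longrightarrow>
        (\<forall>\<epsilon>>0. \<exists>M. \<forall>m\<ge>M. \<forall>n\<ge>M. N (\<lambda>k. u m k - u n k) < \<epsilon>) \<Longrightarrow>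
        (\<exists>x\<in>E. (\<lambda>m. N (\<lambda>k. u m k - x k)) \<longlonglongrightarrow> 0)"
    using latO(9)[OF L] by blast
qed

lemma lat_zero:
  assumes "is_banach_seq_lattice E N" shows "N (\<lambda>k. 0) = 0"
  using latD[OF assms] by blast

lemma lat_sum:
  assumes L: "is_banach_seq_lattice E N" and "finite I"
  shows "(\<forall>i\<in>I. u i \<in> E) \<Longrightarrow> (\<lambda>k. \<Sum>i\<in>I. u i k) \<in> E \<and> N (\<lambda>k. \<Sum>i\<in>I. u i k) \<le> (\<Sum>i\<in>I. N (u i))"
  using assms(2)
proof (induction I rule: finite_induct)
  case empty
  then show ?case using latD(2)[OF L] lat_zero[OF L] by simp
next
  case (insert a F)
  have eq: "(\<lambda>k. \<Sum>i\<in>insert a F. u i k) = (\<lambda>k. u a k + (\<Sum>i\<in>F. u i k))"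
    using insert by simp
  have ua: "u a \<in> E" using insert by simp
  have IH: "(\<lambda>k. \<Sum>i\<in>F. u i k) \<in> E \<and> N (\<lambda>k. \<Sum>i\<in>F. u i k) \<le> (\<Sum>i\<in>F. N (u i))"
    using insert by simp
  have s1: "(\<lambda>k. u a k + (\<Sum>i\<in>F. u i k)) \<in> E"
    by (rule latD(3)[OF L ua IH[THEN conjunct1]])
  have s2: "N (\<lambda>k. u a k + (\<Sum>i\<in>F. u i k)) \<le> N (u a) + N (\<lambda>k. \<Sum>i\<in>F. u i k)"
    by (rule latD(8)[OF L ua IH[THEN conjunct1]])
  have s3: "(\<Sum>i\<in>insert a F. N (u i)) = N (u a) + (\<Sum>i\<in>F. N (u i))"
    using insert(1,2) by (rule sum.insert)
  show ?case unfolding eq s3 using s1 s2 IH[THEN conjunct2] by linarith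
qed

lemma lat_diff:
  assumes L: "is_banach_seq_lattice E N" and x: "x \<in> E" and y: "y \<in> E"
  shows "(\<lambda>k. x k - y k) \<in> E" "N (\<lambda>k. x k - y k) = N (\<lambda>k. y k - x k)"
proof -
  have e1: "(\<lambda>k. x k - y k) = (\<lambda>k. x k + (-1) * y k)" by simp
  show d1: "(\<lambda>k. x k - y k) \<in> E" unfolding e1 by (intro latD(3)[OF L x] latD(4)[OF L y])
  have e2: "(\<lambda>k. y k - x k) = (\<lambda>k. (-1) * (x k - y k))" by simp
  show "N (\<lambda>k. x k - y k) = N (\<lambda>k. y k - x k)"
    unfolding e2 using latD(7)[OF L d1, of "-1"] by simp
qed

lemma lat_abs:
  assumes L: "is_banach_seq_lattice E N" and x: "x \<in> E"
  shows "(\<lambda>k. \<bar>x k\<bar>) \<in> E \<and> N (\<lambda>k. \<bar>x k\<bar>) \<le> N x"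
proof -
  have "x 0 = 0" using latD(1)[OF L] x unfolding seqs_def by auto
  then have "(\<lambda>k. \<bar>x k\<bar>) \<in> seqs" unfolding seqs_def by simp
  then show ?thesis using latD(9)[OF L x] by simp
qed

lemma lat_coord:
  assumes L: "is_banach_seq_lattice E N"
  shows "\<exists>c\<ge>0. \<forall>x\<in>E. \<bar>x k\<bar> \<le> c * N x"
proof (cases "\<exists>y\<in>E. y k \<noteq> 0")
  case False
  then show ?thesis using latD(5)[OF L] by (intro exI[of _ 0]) auto
next
  case True
  then obtain y where y: "y \<in> E" "y k \<noteq> 0" by blast
  have "y 0 = 0" using y latD(1)[OF L] unfolding seqs_def by auto
  have "k \<noteq> 0"
  proof
    assume "k = 0" then show False using \<open>y 0 = 0\<close> y(2) by simp
  qed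
  define e where "e = (\<lambda>i. if i = k then (1::real) else 0)"
  have es: "e \<in> seqs" using \<open>k \<noteq> 0\<close> unfolding seqs_def e_def by simp
  have ys: "(\<lambda>i. (1 / \<bar>y k\<bar>) * y i) \<in> E" by (rule latD(4)[OF L y(1)])
  have "\<forall>i. \<bar>e i\<bar> \<le> \<bar>(1 / \<bar>y k\<bar>) * y i\<bar>" using y(2) unfolding e_def by simp
  then have eE: "e \<in> E" using latD(9)[OF L ys es] by blast
  have "e \<noteq> (\<lambda>k. 0)" unfolding e_def by (metis zero_neq_one)
  then have Npos: "N e > 0" using latD(5,6)[OF L eE] by fastforce
  have "\<bar>x k\<bar> \<le> (1 / N e) * N x" if x: "x \<in> E" for x
  proof -
    have s: "(\<lambda>i. \<bar>x k\<bar> * e i) \<in> seqs" using es unfolding seqs_def by simp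
    have "\<forall>i. \<bar>\<bar>x k\<bar> * e i\<bar> \<le> \<bar>x i\<bar>" unfolding e_def by simp
    then have "N (\<lambda>i. \<bar>x k\<bar> * e i) \<le> N x" using latD(9)[OF L x s] by blast
    moreover have "N (\<lambda>i. \<bar>x k\<bar> * e i) = \<bar>x k\<bar> * N e" using latD(7)[OF L eE] by simp
    ultimately show ?thesis using Npos by (simp add: field_simps)
  qed
  then show ?thesis using Npos by (intro exI[of _ "1 / N e"]) auto
qed

lemma shift_neg: "shift (- int n) x k = (if k \<ge> 1 then x (k + n) else 0)"
proof (cases "k \<ge> 1")
  case True
  then have "nat (int k - - int n) = k + n" by simp
  then show ?thesis unfolding shift_def using True by simp
next
  case False then show ?thesis unfolding shift_def by simp
qed

lemma shift_comp: "shift (- int m) (shift (- int n) x) = shift (- int (m + n)) x"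
proof
  fix k show "shift (- int m) (shift (- int n) x) k = shift (- int (m + n)) x k"
    unfolding shift_neg by (simp add: add.assoc add.commute[of m n])
qed

lemma shift_scale: "shift n (\<lambda>k. c * x k) = (\<lambda>k. c * shift n x k)"
  unfolding shift_def by (simp add: fun_eq_iff)

lemma shift_0fun: "shift n (\<lambda>k. 0) = (\<lambda>k. 0)"
  unfolding shift_def by (simp add: fun_eq_iff)

lemma shift_zero: "x \<in> seqs \<Longrightarrow> shift (- int 0) x = x"
proof
  fix k assume "x \<in> seqs" then have "x 0 = 0" unfolding seqs_def by simp
  then show "shift (- int 0) x k = x k" unfolding shift_neg by (cases k) auto
qed




lemma fekete:
  fixes b :: "nat \<Rightarrow> real"
  assumes b0: "b 0 = 0" and nn: "\<And>n. b n \<ge> 0" and sub: "\<And>m n. b (m + n) \<le> b m + b n"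
  shows "convergent (\<lambda>n. b n / real n)"
proof -
  define S where "S = {b n / real n | n. n \<ge> 1}"
  define L where "L = Inf S"
  have Sne: "S \<noteq> {}" unfolding S_def by auto
  have Sbdd: "bdd_below S" unfolding S_def using nn by (intro bdd_belowI[of _ 0]) auto
  have low: "L \<le> b n / real n" if "n \<ge> 1" for n
    unfolding L_def using that by (intro cInf_lower[OF _ Sbdd]) (auto simp: S_def)
  have "(\<lambda>n. b n / real n) \<longlonglongrightarrow> L"
  proof (rule LIMSEQ_I)
    fix r :: real assume r: "r > 0"
    have "Inf S < L + r/2" unfolding L_def using r by simp
    then obtain v where "v \<in> S" "v < L + r/2" using cInf_less_iff[OF Sne Sbdd] by blast
    then obtain m where m: "m \<ge> 1" "b m / real m < L + r/2" unfolding S_def by blast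
    define B where "B = (\<Sum>s<m. b s)"
    have B0: "B \<ge> 0" unfolding B_def using nn by (simp add: sum_nonneg)
    have key: "b (q * m + s) \<le> real q * b m + B" if "s < m" for q s
    proof (induction q)
      case 0
      then show ?case unfolding B_def using that nn
        by (simp add: member_le_sum)
    next
      case (Suc q)
      have "b (Suc q * m + s) = b (m + (q * m + s))" by (simp add: algebra_simps)
      also have "\<dots> \<le> b m + b (q * m + s)" by (rule sub)
      also have "\<dots> \<le> b m + (real q * b m + B)" using Suc by simp
      finally show ?case by (simp add: algebra_simps)
    qed
    obtain no :: nat where no: "B / r * 2 < real no" using reals_Archimedean2 by blast
    show "\<exists>no. \<forall>n\<ge>no. norm (b n / real n - L) < r"
    proof (intro exI[of _ "max no 1"] allI impI)
      fix n assume n: "max no 1 \<le> n"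
      then have n1: "n \<ge> 1" and nno: "n \<ge> no" by auto
      have npos: "real n > 0" using n1 by simp
      have "b n = b ((n div m) * m + n mod m)" by simp
      also have "\<dots> \<le> real (n div m) * b m + B"
      proof -
        have "n mod m < m" using m(1) by simp
        then show ?thesis by (rule key)
      qed
      also have "\<dots> \<le> (real n / real m) * b m + B"
      proof -
        have "real (n div m) \<le> real n / real m"
          by (rule of_nat_div_le_of_nat)
        then show ?thesis using nn[of m] by (intro add_right_mono mult_right_mono) auto
      qed
      finally have "b n / real n \<le> b m / real m + B / real n"
        using npos m(1) by (simp add: field_simps)
      moreover have "B / real n < r / 2"
      proof -
        have "B / r * 2 < real n" using no nno by linarith
        then have "B * 2 < r * real n" using r by (simp add: field_simps)
        then show ?thesis using npos r by (simp add: field_simps)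
      qed
      ultimately have "b n / real n < L + r" using m(2) by linarith
      moreover have "L \<le> b n / real n" by (rule low[OF n1])
      ultimately show "norm (b n / real n - L) < r" by simp
    qed
  qed
  then show ?thesis unfolding convergent_def by blast
qed

lemma opn_bound:
  assumes L: "is_banach_seq_lattice E N" and sh: "\<forall>n::int. op_bounded_on E N (shift n)"
    and x: "x \<in> E"
  shows "N (shift m x) \<le> op_norm E N (shift m) * N x"
    and "0 \<le> op_norm E N (shift m)"
proof -
  define A where "A = {N (shift m y) | y. y \<in> E \<and> N y \<le> 1}"
  have opA: "op_norm E N (shift m) = Sup A" unfolding op_norm_def A_def by simp
  obtain C where C: "\<forall>y\<in>E. N (shift m y) \<le> C * N y" and inE: "\<forall>y\<in>E. shift m y \<in> E"
    using sh unfolding op_bounded_on_def by blast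
  have bdd: "bdd_above A"
  proof (rule bdd_aboveI[of _ "\<bar>C\<bar>"])
    fix v assume "v \<in> A"
    then obtain y where y: "y \<in> E" "N y \<le> 1" "v = N (shift m y)" unfolding A_def by blast
    have n0: "0 \<le> N y" by (rule latD(5)[OF L y(1)])
    have "v \<le> C * N y" using C y(1) y(3) by simp
    also have "C * N y \<le> \<bar>C\<bar> * N y" using n0 by (intro mult_right_mono) auto
    also have "\<dots> \<le> \<bar>C\<bar>" using y(2) n0 by (intro mult_left_le) auto
    finally show "v \<le> \<bar>C\<bar>" .
  qed
  have "N (shift m (\<lambda>k. 0)) = 0" unfolding shift_0fun by (rule lat_zero[OF L])
  moreover have "(\<lambda>k. 0) \<in> E \<and> N (\<lambda>k. 0) \<le> 1" using latD(2)[OF L] lat_zero[OF L] by simp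
  ultimately have zA: "0 \<in> A" unfolding A_def by force
  show nn: "0 \<le> op_norm E N (shift m)"
    unfolding opA using cSup_upper[OF zA bdd] .
  show "N (shift m x) \<le> op_norm E N (shift m) * N x"
  proof (cases "N x = 0")
    case True
    then have x0: "x = (\<lambda>k. 0)" using latD(6)[OF L x] by simp
    have "N (shift m x) = 0" unfolding x0 shift_0fun by (rule lat_zero[OF L])
    then show ?thesis using True by simp
  next
    case False
    then have Np: "N x > 0" using latD(5)[OF L x] by simp
    define y where "y = (\<lambda>k. (1 / N x) * x k)"
    have yE: "y \<in> E" unfolding y_def by (rule latD(4)[OF L x])
    have "N y = \<bar>1 / N x\<bar> * N x" unfolding y_def by (rule latD(7)[OF L x])
    then have Ny: "N y = 1" using Np by simp
    have "N (shift m y) = \<bar>1 / N x\<bar> * N (shift m x)"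
      unfolding y_def shift_scale by (rule latD(7)[OF L inE[rule_format, OF x]])
    then have e: "N (shift m y) = (1 / N x) * N (shift m x)" using Np by simp
    have "N (shift m y) \<in> A" unfolding A_def by (rule CollectI, rule exI[of _ y]) (simp add: yE Ny)
    then have "N (shift m y) \<le> Sup A" by (rule cSup_upper[OF _ bdd])
    then have "(1 / N x) * N (shift m x) \<le> op_norm E N (shift m)" unfolding opA e .
    then show ?thesis using Np by (simp add: field_simps)
  qed
qed

lemma opn_submult:
  assumes L: "is_banach_seq_lattice E N" and sh: "\<forall>n::int. op_bounded_on E N (shift n)"
  shows "op_norm E N (shift (- int (m + n))) \<le> op_norm E N (shift (- int m)) * op_norm E N (shift (- int n))"
proof -
  have inE: "\<forall>y\<in>E. shift k y \<in> E" for k using sh unfolding op_bounded_on_def by blast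
  have z: "(\<lambda>k. 0) \<in> E \<and> N (\<lambda>k. 0) \<le> 1" using latD(2)[OF L] lat_zero[OF L] by simp
  have ne: "{N (shift (- int (m + n)) y) | y. y \<in> E \<and> N y \<le> 1} \<noteq> {}"
    using z by blast
  show ?thesis unfolding op_norm_def[of _ _ "shift (- int (m + n))"]
  proof (rule cSup_least[OF ne])
    fix v assume "v \<in> {N (shift (- int (m + n)) y) | y. y \<in> E \<and> N y \<le> 1}"
    then obtain y where y: "y \<in> E" "N y \<le> 1" "v = N (shift (- int (m + n)) y)" by blast
    have "v = N (shift (- int m) (shift (- int n) y))" using y(3) shift_comp by simp
    also have "\<dots> \<le> op_norm E N (shift (- int m)) * N (shift (- int n) y)"
      by (rule opn_bound(1)[OF L sh inE[rule_format, OF y(1)]])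
    also have "\<dots> \<le> op_norm E N (shift (- int m)) * (op_norm E N (shift (- int n)) * N y)"
      by (intro mult_left_mono opn_bound(1)[OF L sh y(1)] opn_bound(2)[OF L sh y(1)])
    also have "\<dots> \<le> op_norm E N (shift (- int m)) * op_norm E N (shift (- int n))"
    proof (rule mult_left_mono)
      show "op_norm E N (shift (- int n)) * N y \<le> op_norm E N (shift (- int n))"
        by (rule mult_left_le[OF y(2) opn_bound(2)[OF L sh y(1)]])
      show "0 \<le> op_norm E N (shift (- int m))" by (rule opn_bound(2)[OF L sh y(1)])
    qed
    finally show "v \<le> op_norm E N (shift (- int m)) * op_norm E N (shift (- int n))" .
  qed
qed

lemma exists_contr:
  assumes L: "is_banach_seq_lattice E N" and sh: "\<forall>n::int. op_bounded_on E N (shift n)"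
    and km: "k_minus E N < 1"
  shows "\<exists>M\<ge>1. op_norm E N (shift (- int M)) < 1"
proof (rule ccontr)
  assume "\<not> ?thesis"
  then have ge: "\<And>M. M \<ge> 1 \<Longrightarrow> op_norm E N (shift (- int M)) \<ge> 1" by (simp add: not_less)
  define a where "a n = op_norm E N (shift (- int n))" for n
  define b where "b n = (if n = 0 then 0 else ln (a n))" for n
  have age: "n \<ge> 1 \<Longrightarrow> a n \<ge> 1" for n using ge unfolding a_def by simp
  have bnn: "b n \<ge> 0" for n unfolding b_def using age[of n] by simp
  have bsub: "b (m + n) \<le> b m + b n" for m n
  proof (cases "m = 0 \<or> n = 0")
    case True then show ?thesis unfolding b_def by auto
  next
    case False
    then have m1: "m \<ge> 1" and n1: "n \<ge> 1" by auto
    have "a (m + n) \<le> a m * a n" unfolding a_def by (rule opn_submult[OF L sh])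
    then have "ln (a (m + n)) \<le> ln (a m * a n)"
      using age[of "m+n"] m1 by (intro ln_mono) auto
    also have "\<dots> = ln (a m) + ln (a n)" using age[OF m1] age[OF n1] by (simp add: ln_mult)
    finally show ?thesis unfolding b_def using False by simp
  qed
  have "convergent (\<lambda>n. b n / real n)"
    by (rule fekete[of b]) (simp add: b_def, rule bnn, rule bsub)
  then obtain l where l: "(\<lambda>n. b n / real n) \<longlonglongrightarrow> l"
    unfolding convergent_def by blast
  have l0: "l \<ge> 0" using bnn by (intro LIMSEQ_le_const[OF l]) (auto intro!: divide_nonneg_nonneg)
  have ev: "\<forall>\<^sub>F n in sequentially. exp (b n / real n) = root n (a n)"
  proof (rule eventually_sequentiallyI[of 1])
    fix n :: nat assume n: "n \<ge> 1"
    have "root n (a n) = a n powr (1 / real n)" using n age[OF n] by (intro root_powr_inverse) auto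
    also have "\<dots> = exp (b n / real n)" using n age[OF n] unfolding b_def powr_def by simp
    finally show "exp (b n / real n) = root n (a n)" by simp
  qed
  have "(\<lambda>n. root n (a n)) \<longlonglongrightarrow> exp l"
    using Lim_transform_eventually[OF tendsto_exp[OF l] ev] .
  then have "k_minus E N = exp l" unfolding k_minus_def a_def by (rule limI)
  moreover have "exp l \<ge> 1" using l0 by simp
  ultimately show False using km by simp
qed




lemma geo_bound:
  fixes \<theta> :: real
  assumes "0 \<le> \<theta>" "\<theta> < 1" "n \<le> m"
  shows "(\<Sum>q\<in>{n..<m}. \<theta>^q) \<le> \<theta>^n / (1 - \<theta>) - \<theta>^m / (1 - \<theta>)"
  using assms(3)
proof (induction m rule: dec_induct)
  case base then show ?case by simp
next
  case (step m)
  have "(\<Sum>q\<in>{n..<Suc m}. \<theta>^q) = (\<Sum>q\<in>{n..<m}. \<theta>^q) + \<theta>^m"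
    using step(1) by simp
  also have "\<dots> \<le> \<theta>^n / (1 - \<theta>) - \<theta>^m / (1 - \<theta>) + \<theta>^m" using step(3) by simp
  also have "\<dots> = \<theta>^n / (1 - \<theta>) - \<theta>^Suc m / (1 - \<theta>)"
  proof -
    have d: "1 - \<theta> \<noteq> 0" using assms(2) by simp
    have e1: "\<theta>^m * (1 - \<theta>) = \<theta>^m - \<theta>^Suc m" by (simp add: algebra_simps)
    have e2: "\<theta>^m = \<theta>^m * (1 - \<theta>) / (1 - \<theta>)" using d by simp
    have "\<theta>^m = (\<theta>^m - \<theta>^Suc m) / (1 - \<theta>)" using e2 unfolding e1 .
    then have "\<theta>^m = \<theta>^m / (1 - \<theta>) - \<theta>^Suc m / (1 - \<theta>)" by (simp add: diff_divide_distrib)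
    then show ?thesis by linarith
  qed
  finally show ?case .
qed

lemma geo_bound2:
  fixes \<theta> :: real
  assumes "0 \<le> \<theta>" "\<theta> < 1" "n \<le> m"
  shows "(\<Sum>q\<in>{n..<m}. \<theta>^q) \<le> \<theta>^n / (1 - \<theta>)"
proof -
  have "0 \<le> \<theta>^m / (1 - \<theta>)" using assms by simp
  then show ?thesis using geo_bound[OF assms] by linarith
qed

lemma main_bound:
  assumes L: "is_banach_seq_lattice E N" and sh: "\<forall>n::int. op_bounded_on E N (shift n)"
    and km: "k_minus E N < 1"
  shows "\<exists>K\<ge>0. \<forall>a\<in>E. \<exists>x\<in>E. N x \<le> K * N a \<and> (\<forall>k\<ge>1. \<forall>i\<ge>k. \<bar>a i\<bar> \<le> x k)"
proof -
  obtain M where M1: "M \<ge> 1" and Mc: "op_norm E N (shift (- int M)) < 1"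
    using exists_contr[OF L sh km] by blast
  have inE: "\<And>y. y \<in> E \<Longrightarrow> shift k y \<in> E" for k using sh unfolding op_bounded_on_def by blast
  define \<theta> where "\<theta> = op_norm E N (shift (- int M))"
  have th0: "0 \<le> \<theta>" unfolding \<theta>_def by (rule opn_bound(2)[OF L sh latD(2)[OF L]])
  have th1: "\<theta> < 1" unfolding \<theta>_def by (rule Mc)
  define K0 where "K0 = (\<Sum>r<M. op_norm E N (shift (- int r)))"
  have K00: "K0 \<ge> 0" unfolding K0_def
    by (intro sum_nonneg opn_bound(2)[OF L sh latD(2)[OF L]])
  define K where "K = K0 / (1 - \<theta>)"
  have K0': "K \<ge> 0" unfolding K_def using K00 th1 by simp
  have "\<exists>x\<in>E. N x \<le> K * N a \<and> (\<forall>k\<ge>1. \<forall>i\<ge>k. \<bar>a i\<bar> \<le> x k)" if a: "a \<in> E" for a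
  proof -
    define \<alpha> where "\<alpha> = (\<lambda>k. \<bar>a k\<bar>)"
    have \<alpha>E: "\<alpha> \<in> E" and N\<alpha>: "N \<alpha> \<le> N a" using lat_abs[OF L a] unfolding \<alpha>_def by auto
    define D where "D = (\<lambda>k. \<Sum>r<M. shift (- int r) \<alpha> k)"
    have DE: "D \<in> E" and ND1: "N D \<le> (\<Sum>r<M. N (shift (- int r) \<alpha>))"
      using lat_sum[OF L, of "{..<M}" "\<lambda>r. shift (- int r) \<alpha>"] inE[OF \<alpha>E] unfolding D_def by auto
    have "(\<Sum>r<M. N (shift (- int r) \<alpha>)) \<le> (\<Sum>r<M. op_norm E N (shift (- int r)) * N a)"
    proof (rule sum_mono)
      fix r assume "r \<in> {..<M}"
      have "N (shift (- int r) \<alpha>) \<le> op_norm E N (shift (- int r)) * N \<alpha>"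
        by (rule opn_bound(1)[OF L sh \<alpha>E])
      also have "\<dots> \<le> op_norm E N (shift (- int r)) * N a"
        by (intro mult_left_mono N\<alpha> opn_bound(2)[OF L sh \<alpha>E])
      finally show "N (shift (- int r) \<alpha>) \<le> op_norm E N (shift (- int r)) * N a" .
    qed
    also have "\<dots> = K0 * N a" unfolding K0_def by (simp add: sum_distrib_right)
    finally have ND: "N D \<le> K0 * N a" using ND1 by linarith
    have Dseq: "D \<in> seqs" using DE latD(1)[OF L] by blast
    define u where "u q = shift (- int (q * M)) D" for q
    have uE: "u q \<in> E" for q unfolding u_def by (rule inE[OF DE])
    have uN: "N (u q) \<le> \<theta>^q * N D" for q
    proof (induction q)
      case 0
      then show ?case unfolding u_def using shift_zero[OF Dseq] by simp
    next
      case (Suc q)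
      have "u (Suc q) = shift (- int M) (u q)" unfolding u_def shift_comp
        by (simp add: add.commute)
      then have "N (u (Suc q)) \<le> \<theta> * N (u q)" unfolding \<theta>_def using opn_bound(1)[OF L sh uE] by simp
      also have "\<dots> \<le> \<theta> * (\<theta>^q * N D)" using Suc th0 by (intro mult_left_mono) auto
      finally show ?case by simp
    qed
    have \<alpha>0: "\<alpha> k \<ge> 0" for k unfolding \<alpha>_def by simp
    have uval: "u q k = (if k \<ge> 1 then (\<Sum>r<M. \<alpha> (k + q * M + r)) else 0)" for q k
      unfolding u_def D_def shift_neg by (auto simp: add.assoc)
    have u0: "u q k \<ge> 0" for q k unfolding uval using \<alpha>0 by (simp add: sum_nonneg)
    define P where "P m = (\<lambda>k. \<Sum>q<m. u q k)" for m
    have PE: "P m \<in> E" and PN1: "N (P m) \<le> (\<Sum>q<m. N (u q))" for m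
      using lat_sum[OF L, of "{..<m}" u] uE unfolding P_def by auto
    have PN: "N (P m) \<le> N D / (1 - \<theta>)" for m
    proof -
      have "(\<Sum>q<m. N (u q)) \<le> (\<Sum>q<m. \<theta>^q * N D)" by (intro sum_mono uN)
      also have "\<dots> = (\<Sum>q\<in>{0..<m}. \<theta>^q) * N D" by (simp add: sum_distrib_right atLeast0LessThan)
      also have "\<dots> \<le> (\<theta>^0 / (1 - \<theta>)) * N D"
        using geo_bound2[OF th0 th1, of 0 m] latD(5)[OF L DE] by (intro mult_right_mono) auto
      finally show ?thesis using PN1[of m] by simp
    qed
    have Pdiff: "N (\<lambda>k. P m k - P n k) \<le> \<theta>^n * (N D / (1 - \<theta>))" if "n \<le> m" for m n
    proof -
      have eq: "(\<lambda>k. P m k - P n k) = (\<lambda>k. \<Sum>q\<in>{n..<m}. u q k)"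
        unfolding P_def using that by (simp add: lessThan_atLeast0 sum_diff_nat_ivl)
      have "N (\<lambda>k. P m k - P n k) \<le> (\<Sum>q\<in>{n..<m}. N (u q))"
        unfolding eq using lat_sum[OF L, of "{n..<m}" u] uE by auto
      also have "\<dots> \<le> (\<Sum>q\<in>{n..<m}. \<theta>^q * N D)" by (intro sum_mono uN)
      also have "\<dots> = (\<Sum>q\<in>{n..<m}. \<theta>^q) * N D" by (simp add: sum_distrib_right)
      also have "\<dots> \<le> (\<theta>^n / (1 - \<theta>)) * N D"
        using geo_bound2[OF th0 th1 that] latD(5)[OF L DE] by (intro mult_right_mono) auto
      finally show ?thesis by simp
    qed
    have cauchy: "\<forall>\<epsilon>>0. \<exists>Mc. \<forall>m\<ge>Mc. \<forall>n\<ge>Mc. N (\<lambda>k. P m k - P n k) < \<epsilon>"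
    proof (intro allI impI)
      fix \<epsilon> :: real assume e: "\<epsilon> > 0"
      have "(\<lambda>n. \<theta>^n * (N D / (1 - \<theta>))) \<longlonglongrightarrow> 0 * (N D / (1 - \<theta>))"
        using th0 th1 by (intro tendsto_mult LIMSEQ_power_zero tendsto_const) simp
      then obtain Mc where Mc: "\<forall>n\<ge>Mc. norm (\<theta>^n * (N D / (1 - \<theta>)) - 0) < \<epsilon>"
        using e unfolding lim_sequentially dist_real_def by auto
      show "\<exists>Mc. \<forall>m\<ge>Mc. \<forall>n\<ge>Mc. N (\<lambda>k. P m k - P n k) < \<epsilon>"
      proof (intro exI[of _ Mc] allI impI)
        fix m n assume mn: "m \<ge> Mc" "n \<ge> Mc"
        have aux: "N (\<lambda>k. P m' k - P n' k) < \<epsilon>" if "n' \<le> m'" "n' \<ge> Mc" for m' n'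
        proof -
          have nn: "0 \<le> \<theta>^n' * (N D / (1 - \<theta>))" using th0 th1 latD(5)[OF L DE] by simp
          have "norm (\<theta>^n' * (N D / (1 - \<theta>)) - 0) < \<epsilon>" using Mc that(2) by blast
          then have "\<theta>^n' * (N D / (1 - \<theta>)) < \<epsilon>"
            by (simp only: diff_zero real_norm_def abs_of_nonneg[OF nn])
          then show ?thesis using Pdiff[OF that(1)] by linarith
        qed
        show "N (\<lambda>k. P m k - P n k) < \<epsilon>"
        proof (cases "n \<le> m")
          case True then show ?thesis using aux mn by simp
        next
          case False
          then have "N (\<lambda>k. P n k - P m k) < \<epsilon>" using aux mn by simp
          then show ?thesis using lat_diff(2)[OF L PE PE, of m n] by simp
        qed
      qed
    qed
    obtain x where xE: "x \<in> E" and xlim: "(\<lambda>m. N (\<lambda>k. P m k - x k)) \<longlonglongrightarrow> 0"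
      using latD(10)[OF L, of P] PE cauchy by blast
    have coord: "(\<lambda>m. P m k) \<longlonglongrightarrow> x k" for k
    proof -
      obtain c where c: "c \<ge> 0" "\<forall>y\<in>E. \<bar>y k\<bar> \<le> c * N y" using lat_coord[OF L] by blast
      have b: "\<bar>P m k - x k\<bar> \<le> c * N (\<lambda>k. P m k - x k)" for m
        using c(2) lat_diff(1)[OF L PE xE, of m] by fastforce
      have l: "(\<lambda>m. c * N (\<lambda>k. P m k - x k)) \<longlonglongrightarrow> c * 0"
        by (intro tendsto_mult tendsto_const xlim)
      have l2: "(\<lambda>m. - (c * N (\<lambda>k. P m k - x k))) \<longlonglongrightarrow> - (c * 0)"
        by (intro tendsto_minus l)
      have "(\<lambda>m. P m k - x k) \<longlonglongrightarrow> 0"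
      proof (rule tendsto_sandwich[OF _ _ _ ])
        show "\<forall>\<^sub>F m in sequentially. - (c * N (\<lambda>k. P m k - x k)) \<le> P m k - x k"
          using b by (intro always_eventually allI) (metis abs_le_iff minus_le_iff)
        show "\<forall>\<^sub>F m in sequentially. P m k - x k \<le> c * N (\<lambda>k. P m k - x k)"
          using b by (intro always_eventually allI) (metis abs_le_iff)
        show "(\<lambda>m. - (c * N (\<lambda>k. P m k - x k))) \<longlonglongrightarrow> 0" using l2 by simp
        show "(\<lambda>m. c * N (\<lambda>k. P m k - x k)) \<longlonglongrightarrow> 0" using l by simp
      qed
      then have "(\<lambda>m. (P m k - x k) + x k) \<longlonglongrightarrow> 0 + x k" by (intro tendsto_add tendsto_const)
      then show ?thesis by simp
    qed
    have Pinc: "incseq (\<lambda>m. P m k)" for k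
      by (rule incseq_SucI) (simp add: P_def u0)
    have Ple: "P m k \<le> x k" for m k by (rule incseq_le[OF Pinc coord])
    have dom: "\<bar>a i\<bar> \<le> x k" if k1: "k \<ge> 1" and ik: "i \<ge> k" for k i
    proof -
      define d where "d = i - k"
      define q where "q = d div M"
      define r where "r = d mod M"
      have r: "r < M" unfolding r_def using M1 by simp
      have i: "i = k + q * M + r" unfolding q_def r_def d_def using ik by simp
      have "\<bar>a i\<bar> = \<alpha> (k + q * M + r)" unfolding \<alpha>_def i ..
      also have "\<dots> \<le> (\<Sum>r<M. \<alpha> (k + q * M + r))"
        using r \<alpha>0 by (intro member_le_sum) auto
      also have "\<dots> = u q k" unfolding uval using k1 by simp
      also have "\<dots> \<le> P (Suc q) k" unfolding P_def using u0
        by (intro member_le_sum) auto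
      also have "\<dots> \<le> x k" by (rule Ple)
      finally show ?thesis .
    qed
    have xN: "N x \<le> N D / (1 - \<theta>)"
    proof -
      have "N x - N D / (1 - \<theta>) \<le> N (\<lambda>k. P m k - x k)" for m
      proof -
        have xd: "(\<lambda>k. x k - P m k) \<in> E" by (rule lat_diff(1)[OF L xE PE])
        have "x = (\<lambda>k. P m k + (x k - P m k))" by simp
        then have "N x = N (\<lambda>k. P m k + (x k - P m k))" by simp
        also have "\<dots> \<le> N (P m) + N (\<lambda>k. x k - P m k)" by (rule latD(8)[OF L PE xd])
        also have "N (\<lambda>k. x k - P m k) = N (\<lambda>k. P m k - x k)" by (rule lat_diff(2)[OF L xE PE])
        finally show ?thesis using PN[of m] by linarith
      qed
      then have "N x - N D / (1 - \<theta>) \<le> 0"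
        by (intro LIMSEQ_le_const[OF xlim]) auto
      then show ?thesis by simp
    qed
    have "N D / (1 - \<theta>) \<le> K0 * N a / (1 - \<theta>)" using ND th1 by (simp add: divide_right_mono)
    then have "N x \<le> K * N a" using xN unfolding K_def by simp
    then show ?thesis using xE dom by blast
  qed
  then show ?thesis using K0' by blast
qed




theorem proposition4p2:
  fixes E X :: "(nat \<Rightarrow> real) set"
    and NE NX :: "(nat \<Rightarrow> real) \<Rightarrow> real"
  assumes E_lat: "is_banach_seq_lattice E NE"
    and shifts: "\<forall>n::int. op_bounded_on E NE (shift n)"
    and kminus: "k_minus E NE < 1"
    and X_sym: "is_symmetric_seq_space X NX"
    and X_char: "\<forall>a\<in>seqs. a \<in> X \<longleftrightarrow> bounded_seq a \<and> dyadic_rearr a \<in> E"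
    and X_norm: "\<exists>c C. 0 < c \<and> 0 < C \<and>
                   (\<forall>a\<in>X. c * NX a \<le> NE (dyadic_rearr a) \<and> NE (dyadic_rearr a) \<le> C * NX a)"
  shows "EX_set X = E \<and>
         (\<exists>c C. 0 < c \<and> 0 < C \<and>
            (\<forall>a\<in>E. c * NE a \<le> EX_norm NX a \<and> EX_norm NX a \<le> C * NE a))"
proof -
  note L = E_lat
  obtain c C where c: "0 < c" and C: "0 < C"
    and cC: "\<forall>a\<in>X. c * NX a \<le> NE (dyadic_rearr a) \<and> NE (dyadic_rearr a) \<le> C * NX a"
    using X_norm by blast
  obtain K where K0: "K \<ge> 0"
    and KB: "\<forall>a\<in>E. \<exists>x\<in>E. NE x \<le> K * NE a \<and> (\<forall>k\<ge>1. \<forall>i\<ge>k. \<bar>a i\<bar> \<le> x k)"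
    using main_bound[OF L shifts kminus] by blast
  have dy0: "dyadic_rearr b 0 = 0" for b unfolding dyadic_rearr_def by simp
  have dyseq: "dyadic_rearr b \<in> seqs" for b unfolding seqs_def using dy0 by simp
  have bseq: "block_seq a \<in> seqs" for a unfolding seqs_def using block0 by simp
  have part1: "block_seq a \<in> X \<and> NE (dyadic_rearr (block_seq a)) \<le> K * NE a" if a: "a \<in> E" for a
  proof -
    obtain x where xE: "x \<in> E" and xN: "NE x \<le> K * NE a"
      and xd: "\<forall>k\<ge>1. \<forall>i\<ge>k. \<bar>a i\<bar> \<le> x k" using KB a by blast
    define b where "b = block_seq a"
    have bnd: "\<bar>b i\<bar> \<le> x 1" for i
    proof (cases "i = 0")
      case True
      have "\<bar>a 1\<bar> \<le> x 1" using xd by simp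
      then show ?thesis unfolding b_def True block0 by simp
    next
      case False
      then have "2^(1-1) \<le> i" by simp
      then obtain k where k: "k \<ge> 1" "block_seq a i = a k" using block_ge[of 1 i a] by auto
      then show ?thesis unfolding b_def using xd by simp
    qed
    then have bb: "bounded_seq b" unfolding bounded_seq_def by blast
    have dom: "\<bar>dyadic_rearr b j\<bar> \<le> \<bar>x j\<bar>" for j
    proof (cases "j \<ge> 1")
      case False
      then have "j = 0" by simp
      then show ?thesis using dy0[of b] by simp
    next
      case True
      have xj: "x j \<ge> 0" using xd True by (meson abs_ge_zero order_trans order_refl)
      have h: "\<forall>i. 2^(j-1) \<le> i \<longrightarrow> \<bar>b i\<bar> \<le> x j"
      proof (intro allI impI)
        fix i :: nat assume "2^(j-1) \<le> i"
        then obtain k where "k \<ge> j" "block_seq a i = a k" using block_ge[OF True] by blast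
        then show "\<bar>b i\<bar> \<le> x j" unfolding b_def using xd True by simp
      qed
      have "dyadic_rearr b j \<le> x j \<and> 0 \<le> dyadic_rearr b j"
        unfolding dyadic_rearr_def using dr_upper[OF xj True h] True by simp
      then show ?thesis by simp
    qed
    have "dyadic_rearr b \<in> E \<and> NE (dyadic_rearr b) \<le> NE x"
      using latD(9)[OF L xE dyseq] dom by blast
    moreover have "b \<in> X" using X_char bseq bb calculation unfolding b_def by blast
    ultimately show ?thesis using xN unfolding b_def by auto
  qed
  have part2: "a \<in> E \<and> NE a \<le> NE (dyadic_rearr (block_seq a))"
    if a: "a \<in> seqs" and bX: "block_seq a \<in> X" for a
  proof -
    define b where "b = block_seq a"
    have bb: "bounded_seq b" and dE: "dyadic_rearr b \<in> E"
      using X_char bseq bX unfolding b_def by blast+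
    have dom: "\<bar>a j\<bar> \<le> \<bar>dyadic_rearr b j\<bar>" for j
    proof (cases "j \<ge> 1")
      case False
      then have "j = 0" by simp
      then show ?thesis using a unfolding seqs_def by simp
    next
      case True
      have h: "\<forall>i. 2^(j-1) \<le> i \<and> i < (2::nat)^j \<longrightarrow> \<bar>a j\<bar> \<le> \<bar>b i\<bar>"
        unfolding b_def using block_at[OF True] by simp
      have "\<bar>a j\<bar> \<le> decr_rearr b (2^(j-1))" by (rule dr_lower[OF bb True h])
      then show ?thesis unfolding dyadic_rearr_def using True by simp
    qed
    show ?thesis using latD(9)[OF L dE a] dom unfolding b_def by blast
  qed
  have eq: "EX_set X = E"
  proof
    show "EX_set X \<subseteq> E" unfolding EX_set_def using part2 by blast
    show "E \<subseteq> EX_set X" unfolding EX_set_def using part1 latD(1)[OF L] by blast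
  qed
  have "\<forall>a\<in>E. (1 / C) * NE a \<le> EX_norm NX a \<and> EX_norm NX a \<le> (K / c + 1) * NE a"
  proof
    fix a assume a: "a \<in> E"
    have p1: "block_seq a \<in> X" "NE (dyadic_rearr (block_seq a)) \<le> K * NE a" using part1[OF a] by auto
    have s: "a \<in> seqs" using a latD(1)[OF L] by blast
    have p2: "NE a \<le> NE (dyadic_rearr (block_seq a))" using part2[OF s p1(1)] by simp
    have b1: "c * NX (block_seq a) \<le> NE (dyadic_rearr (block_seq a))"
      and b2: "NE (dyadic_rearr (block_seq a)) \<le> C * NX (block_seq a)" using cC p1(1) by auto
    have na: "NE a \<ge> 0" by (rule latD(5)[OF L a])
    have "NE a \<le> C * NX (block_seq a)" using p2 b2 by linarith
    then have l: "(1 / C) * NE a \<le> NX (block_seq a)" using C by (simp add: field_simps)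
    have "c * NX (block_seq a) \<le> K * NE a" using b1 p1(2) by linarith
    then have "NX (block_seq a) \<le> K * NE a / c" using c by (simp add: field_simps)
    also have "\<dots> = (K / c) * NE a" by simp
    also have "\<dots> \<le> (K / c + 1) * NE a" using na by (simp add: distrib_right)
    finally show "(1 / C) * NE a \<le> EX_norm NX a \<and> EX_norm NX a \<le> (K / c + 1) * NE a"
      using l unfolding EX_norm_def by simp
  qed
  moreover have "0 < 1 / C" using C by simp
  moreover have "0 \<le> K / c" using K0 c by simp
  then have "0 < K / c + 1" by linarith
  ultimately show ?thesis using eq \<open>0 < K / c + 1\<close> by blast
qed


end
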